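(* In a soft sequence heap with rank threshold $r_0=\lceil\lg(1/\epsilon)\rceil$, for every item $e$ contained in a sequence of rank $r$, we have $|C(e)|\le c_r$ and $|W(e)|\le w_r$, where $c_r=w_r=0$ for $r\le r_0$ and $c_r=w_r=2^{\lfloor (r-r_0)/2\rfloor}-1$ for $r>r_0$.
   Context: Soft sequence heap with error parameter $0<\epsilon<1$ and $r_0=\lceil \lg(1/\epsilon)\rceil$ ($\lg$ = binary logarithm). The heap stores a list of nonempty sequences of items, each sorted increasingly by key and having a nonnegative integer rank. Each item $e$ currently in a sequence carries a (possibly empty) corruption-set $C(e)$ and witness-set $W(e)$; a newly inserted item has both empty. The operation $\mathrm{reduce}(L)$ on a sorted sequence $L=e_1,\dots,e_m$: for every $1\le i<m/2$, the item $e_{2i}$ is removed from $L$, the items $\{e_{2i}\}\cup C(e_{2i})$ are added to $C(e_{2i+1})$, and the items $\{e_{2i}\}\cup W(e_{2i})$ are added to $W(e_{2i-1})$. A rank-$0$ sequence is created by inserting a single item. Merging two sequences of equal rank $r$ produces their sorted union, of rank $r+1$, with corruption- and witness-sets unchanged; if $r+1>r_0$ and $r+1-r_0$ is even, $\mathrm{reduce}$ is then applied to the result. Apart from $\mathrm{reduce}$, corruption- and witness-sets are only shrunk (by extract-min removing items from them or discarding them). *)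

theory Defs
  imports Complex_Main "HOL-Library.Multiset" "HOL-Library.Sublist"
begin

text \<open>An entry of a sequence: an item e together with its corruption-set C(e)
  and witness-set W(e).  A sequence is a pair (rank, list of entries);
  the heap is a multiset of sequences.\<close>

type_synonym 'a entry = "'a \<times> 'a set \<times> 'a set"
type_synonym 'a sseq = "nat \<times> 'a entry list"

text \<open>reduce on L = e_1..e_m (here 0-indexed, position k = j-1): for 1 <= i < m/2
  the item e_(2i) (index 2i-1) is removed, e_(2i+1) (index 2i) gets
  {e_(2i)} \<union> C(e_(2i)) added to its C-set, and e_(2i-1) (index 2i-2) gets
  {e_(2i)} \<union> W(e_(2i)) added to its W-set.\<close>

definition removed_idx :: "nat \<Rightarrow> nat \<Rightarrow> bool" where
  "removed_idx m k \<longleftrightarrow> odd k \<and> k + 1 < m"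

definition reduce :: "'a entry list \<Rightarrow> 'a entry list" where
  "reduce L =
    map (\<lambda>k. let (e, c, w) = L ! k in
              (e,
               c \<union> (if 0 < k \<and> removed_idx (length L) (k - 1)
                    then insert (fst (L ! (k - 1))) (fst (snd (L ! (k - 1)))) else {}),
               w \<union> (if removed_idx (length L) (k + 1)
                    then insert (fst (L ! (k + 1))) (snd (snd (L ! (k + 1)))) else {})))
        (filter (\<lambda>k. \<not> removed_idx (length L) k) [0..<length L])"

text \<open>Shrinking a sequence (extract-min etc.): same rank, the items form a
  nonempty subsequence, and corruption/witness sets only shrink.\<close>

definition shrink_seq :: "'a sseq \<Rightarrow> 'a sseq \<Rightarrow> bool" where
  "shrink_seq s s' \<longleftrightarrow> fst s' = fst s \<and> snd s' \<noteq> [] \<and>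
     (\<exists>xs. subseq xs (snd s) \<and>
        list_all2 (\<lambda>(e, c, w) (e', c', w'). e' = e \<and> c' \<subseteq> c \<and> w' \<subseteq> w) xs (snd s'))"

inductive reach :: "('a \<Rightarrow> 'k::linorder) \<Rightarrow> nat \<Rightarrow> 'a sseq multiset \<Rightarrow> bool"
  for key :: "'a \<Rightarrow> 'k::linorder" and r0 :: nat where
  empty: "reach key r0 {#}"
| insert: "reach key r0 H \<Longrightarrow> reach key r0 (add_mset (0, [(e, {}, {})]) H)"
| merge: "reach key r0 (add_mset (r, L1) (add_mset (r, L2) H)) \<Longrightarrow>
          mset L = mset L1 + mset L2 \<Longrightarrow> sorted (map (key \<circ> fst) L) \<Longrightarrow>
          reach key r0 (add_mset (Suc r,
             if r0 < Suc r \<and> even (Suc r - r0) then reduce L else L) H)"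
| shrink: "reach key r0 H \<Longrightarrow> M \<subseteq># H \<Longrightarrow> rel_mset shrink_seq M H' \<Longrightarrow>
          reach key r0 H'"

definition cw_bound :: "nat \<Rightarrow> nat \<Rightarrow> nat" where
  "cw_bound r0 r = (if r \<le> r0 then 0 else 2 ^ ((r - r0) div 2) - 1)"

end

theory Submission
  imports Defs
begin

definition ok_entry :: "nat \<Rightarrow> 'a entry \<Rightarrow> bool" where
  "ok_entry b x \<longleftrightarrow> finite (fst (snd x)) \<and> finite (snd (snd x))
     \<and> card (fst (snd x)) \<le> b \<and> card (snd (snd x)) \<le> b"

definition inv :: "nat \<Rightarrow> 'a sseq multiset \<Rightarrow> bool" where
  "inv r0 H \<longleftrightarrow> (\<forall>s\<in>#H. \<forall>x\<in>set (snd s). ok_entry (cw_bound r0 (fst s)) x)"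

lemma ok_mono: "ok_entry b x \<Longrightarrow> b \<le> b' \<Longrightarrow> ok_entry b' x"
  unfolding ok_entry_def by auto

lemma cw_mono: "r \<le> r' \<Longrightarrow> cw_bound r0 r \<le> cw_bound r0 r'"
proof -
  assume a: "r \<le> r'"
  have "(2::nat) ^ ((r - r0) div 2) \<le> 2 ^ ((r' - r0) div 2)"
    by (rule power_increasing) (use a in \<open>auto intro: div_le_mono\<close>)
  then show ?thesis using a unfolding cw_bound_def by (auto intro: diff_le_mono)
qed

lemma cw_step: "r0 < Suc r \<Longrightarrow> even (Suc r - r0) \<Longrightarrow>
   2 * cw_bound r0 r + 1 \<le> cw_bound r0 (Suc r)"
proof -
  assume a: "r0 < Suc r" "even (Suc r - r0)"
  then obtain k where k: "Suc r - r0 = 2 * k" by (metis evenE)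
  with a have k1: "k \<ge> 1" by auto
  have r: "r - r0 = 2 * (k - 1) + 1" using k k1 a by auto
  have "r0 < r" using k k1 a by auto
  then have "cw_bound r0 r = 2 ^ (k - 1) - 1" unfolding cw_bound_def using r by simp
  moreover have "cw_bound r0 (Suc r) = 2 ^ k - 1" unfolding cw_bound_def using k k1 by simp
  moreover have "(2::nat) ^ k = 2 * 2 ^ (k - 1)" using k1
    by (metis Suc_diff_1 less_le_trans power_Suc zero_less_one)
  moreover have "(1::nat) \<le> 2 ^ (k-1)" by simp
  ultimately show ?thesis by linarith
qed


lemma card_ins_un2: "card (c \<union> insert a d) \<le> card c + card d + 1"
proof -
  have "card (c \<union> insert a d) \<le> card c + card (insert a d)" by (rule card_Un_le)
  moreover have "card (insert a d) \<le> card d + 1"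
    by (cases "finite d") (auto simp: card_insert_if)
  ultimately show ?thesis by simp
qed

lemma reduce_ok:
  assumes "\<forall>x\<in>set L. ok_entry b x"
  shows "\<forall>x\<in>set (reduce L). ok_entry (2*b+1) x"
proof
  fix x assume "x \<in> set (reduce L)"
  then obtain k where k: "k < length L" and
    x: "x = (let (e, c, w) = L ! k in
              (e,
               c \<union> (if 0 < k \<and> removed_idx (length L) (k - 1)
                    then insert (fst (L ! (k - 1))) (fst (snd (L ! (k - 1)))) else {}),
               w \<union> (if removed_idx (length L) (k + 1)
                    then insert (fst (L ! (k + 1))) (snd (snd (L ! (k + 1)))) else {})))"
    unfolding reduce_def by auto
  obtain e c w where L: "L ! k = (e, c, w)" by (cases "L ! k") auto
  have okk: "ok_entry b (L ! k)" using assms k by auto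
  have C: "finite (c \<union> (if 0 < k \<and> removed_idx (length L) (k - 1)
                    then insert (fst (L ! (k - 1))) (fst (snd (L ! (k - 1)))) else {}))
     \<and> card (c \<union> (if 0 < k \<and> removed_idx (length L) (k - 1)
                    then insert (fst (L ! (k - 1))) (fst (snd (L ! (k - 1)))) else {})) \<le> 2*b+1"
  proof (cases "0 < k \<and> removed_idx (length L) (k - 1)")
    case True
    then have "ok_entry b (L ! (k-1))" using assms k by auto
    then show ?thesis using True okk L card_ins_un2[of c "fst (L ! (k - 1))" "fst (snd (L ! (k - 1)))"]
      unfolding ok_entry_def by auto
  next
    case False
    then show ?thesis using okk L unfolding ok_entry_def by auto
  qed
  have W: "finite (w \<union> (if removed_idx (length L) (k + 1)
                    then insert (fst (L ! (k + 1))) (snd (snd (L ! (k + 1)))) else {}))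
     \<and> card (w \<union> (if removed_idx (length L) (k + 1)
                    then insert (fst (L ! (k + 1))) (snd (snd (L ! (k + 1)))) else {})) \<le> 2*b+1"
  proof (cases "removed_idx (length L) (k + 1)")
    case True
    then have "k + 1 < length L" unfolding removed_idx_def by auto
    then have "ok_entry b (L ! (k+1))" using assms by auto
    then show ?thesis using True okk L card_ins_un2[of w "fst (L ! (k + 1))" "snd (snd (L ! (k + 1)))"]
      unfolding ok_entry_def by auto
  next
    case False
    then show ?thesis using okk L unfolding ok_entry_def by auto
  qed
  show "ok_entry (2*b+1) x" using C W unfolding x L ok_entry_def by simp
qed

lemma rel_mset_ex: "rel_mset R M N \<Longrightarrow> y \<in># N \<Longrightarrow> \<exists>x\<in>#M. R x y"
proof -
  assume a: "rel_mset R M N" "y \<in># N"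
  then obtain xs ys where xy: "mset xs = M" "mset ys = N" "list_all2 R xs ys"
    unfolding rel_mset_def by blast
  then have "y \<in> set ys" using a(2) by auto
  then obtain i where i: "i < length ys" "ys ! i = y" by (auto simp: in_set_conv_nth)
  have "length xs = length ys" "R (xs ! i) (ys ! i)"
    using xy(3) i(1) by (auto simp: list_all2_conv_all_nth)
  then show ?thesis using i xy(1) by (metis nth_mem set_mset_mset)
qed

lemma shrink_ok:
  assumes "shrink_seq s s'" "\<forall>x\<in>set (snd s). ok_entry b x" "y \<in> set (snd s')"
  shows "ok_entry b y"
proof -
  obtain xs where xs: "subseq xs (snd s)"
    "list_all2 (\<lambda>(e, c, w) (e', c', w'). e' = e \<and> c' \<subseteq> c \<and> w' \<subseteq> w) xs (snd s')"
    using assms(1) unfolding shrink_seq_def by auto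
  obtain x where x: "x \<in> set xs" "(\<lambda>(e, c, w) (e', c', w'). e' = e \<and> c' \<subseteq> c \<and> w' \<subseteq> w) x y"
  proof -
    obtain i where i: "i < length (snd s')" "snd s' ! i = y" using assms(3) by (auto simp: in_set_conv_nth)
    have "length xs = length (snd s')" using xs(2) by (simp add: list_all2_conv_all_nth)
    moreover have "(\<lambda>(e, c, w) (e', c', w'). e' = e \<and> c' \<subseteq> c \<and> w' \<subseteq> w) (xs ! i) (snd s' ! i)"
      using xs(2) i(1) by (simp add: list_all2_conv_all_nth)
    ultimately show ?thesis using that i by (metis nth_mem)
  qed
  have "x \<in> set (snd s)" using xs(1) x(1) by (auto elim: list_emb_set)
  then have "ok_entry b x" using assms(2) by auto
  then show ?thesis using x(2) unfolding ok_entry_def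
    by (cases x; cases y) (auto dest: finite_subset intro: le_trans[OF card_mono])
qed

lemma inv_add: "inv r0 (add_mset s H) \<longleftrightarrow> (\<forall>x\<in>set (snd s). ok_entry (cw_bound r0 (fst s)) x) \<and> inv r0 H"
  unfolding inv_def by simp

lemma reach_inv: "reach key r0 H \<Longrightarrow> inv r0 H"
proof (induction rule: reach.induct)
  case empty
  then show ?case unfolding inv_def by simp
next
  case (insert H e)
  then show ?case unfolding inv_def ok_entry_def by auto
next
  case (merge r L1 L2 H L)
  have sL: "set L = set L1 \<union> set L2"
  proof -
    have "set_mset (mset L) = set_mset (mset L1 + mset L2)" using merge.hyps(2) by simp
    then show ?thesis by simp
  qed
  have I: "(\<forall>x\<in>set L1. ok_entry (cw_bound r0 r) x) \<and> (\<forall>x\<in>set L2. ok_entry (cw_bound r0 r) x) \<and> inv r0 H"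
    using merge.IH by (simp add: inv_add)
  have oL: "\<forall>x\<in>set L. ok_entry (cw_bound r0 r) x"
    using I sL by blast
  show ?case
  proof (cases "r0 < Suc r \<and> even (Suc r - r0)")
    case True
    have "\<forall>x\<in>set (reduce L). ok_entry (2 * cw_bound r0 r + 1) x" by (rule reduce_ok[OF oL])
    have R: "\<forall>x\<in>set (reduce L). ok_entry (cw_bound r0 (Suc r)) x"
    proof
      fix x assume "x \<in> set (reduce L)"
      with \<open>\<forall>x\<in>set (reduce L). ok_entry (2 * cw_bound r0 r + 1) x\<close>
      have "ok_entry (2 * cw_bound r0 r + 1) x" by (rule bspec)
      then show "ok_entry (cw_bound r0 (Suc r)) x"
        by (rule ok_mono) (rule cw_step[OF conjunct1[OF True] conjunct2[OF True]])
    qed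
    have IH: "inv r0 H" using I by (rule conjunct2[OF conjunct2])
    show ?thesis unfolding inv_add if_P[OF True] fst_conv snd_conv using R IH by (rule conjI)
  next
    case False
    have R: "\<forall>x\<in>set L. ok_entry (cw_bound r0 (Suc r)) x"
    proof
      fix x assume "x \<in> set L"
      with oL have "ok_entry (cw_bound r0 r) x" by (rule bspec)
      then show "ok_entry (cw_bound r0 (Suc r)) x"
        by (rule ok_mono) (rule cw_mono, simp)
    qed
    have IH: "inv r0 H" using I by (rule conjunct2[OF conjunct2])
    show ?thesis unfolding inv_add if_not_P[OF False] fst_conv snd_conv using R IH by (rule conjI)
  qed
next
  case (shrink H M H')
  show ?case unfolding inv_def
  proof (intro ballI)
    fix s' y assume s': "s' \<in># H'" and y: "y \<in> set (snd s')"
    obtain s where s: "s \<in># M" "shrink_seq s s'" using rel_mset_ex[OF shrink.hyps(3) s'] by auto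
    have "s \<in># H" using shrink.hyps(2) s(1) by (rule mset_subset_eqD)
    then have "\<forall>x\<in>set (snd s). ok_entry (cw_bound r0 (fst s)) x" using shrink.IH unfolding inv_def by auto
    moreover have "fst s' = fst s" using s(2) unfolding shrink_seq_def by auto
    ultimately show "ok_entry (cw_bound r0 (fst s')) y" using shrink_ok[OF s(2) _ y] by simp
  qed
qed

theorem lemma6:
  fixes \<epsilon> :: real and key :: "'a \<Rightarrow> 'k::linorder"
    and H :: "'a sseq multiset"
  assumes "0 < \<epsilon>" "\<epsilon> < 1"
    and "reach key (nat \<lceil>log 2 (1 / \<epsilon>)\<rceil>) H"
    and "(r, L) \<in># H" and "(e, C, W) \<in> set L"
  shows "card C \<le> cw_bound (nat \<lceil>log 2 (1 / \<epsilon>)\<rceil>) r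
       \<and> card W \<le> cw_bound (nat \<lceil>log 2 (1 / \<epsilon>)\<rceil>) r"
  using reach_inv[OF assms(3)] assms(4,5) unfolding inv_def ok_entry_def by fastforce

end
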